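(* Let $L$ be a finite power associative loop that is left power alternative and has the left inverse property. Then $L$ has the strong monogenic Lagrange property: for every subloop $H$ of $L$ and every $x\in H$, the order of the subloop $\langle x\rangle$ generated by $x$ divides $|H|$.
   Context: A loop is power associative if each subloop generated by one element is a group. It is left power alternative if $L_{x^n}=L_x^n$ for all $x$ and $n>0$, where $L_a$ is the left translation $y\mapsto ay$. It has the left inverse property if $x^{-1}(xy)=y$ for all $x,y$, where $x^{-1}$ is the element with $x^{-1}x=e$. *)

theory Defs
  imports Main
begin

definition loop :: "'a set \<Rightarrow> ('a \<Rightarrow> 'a \<Rightarrow> 'a) \<Rightarrow> 'a \<Rightarrow> bool" where
  "loop L m e \<longleftrightarrow> e \<in> L \<and> (\<forall>x\<in>L. \<forall>y\<in>L. m x y \<in> L)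
     \<and> (\<forall>x\<in>L. m e x = x \<and> m x e = x)
     \<and> (\<forall>a\<in>L. \<forall>b\<in>L. \<exists>!x. x \<in> L \<and> m a x = b)
     \<and> (\<forall>a\<in>L. \<forall>b\<in>L. \<exists>!y. y \<in> L \<and> m y a = b)"

definition subloop :: "'a set \<Rightarrow> 'a set \<Rightarrow> ('a \<Rightarrow> 'a \<Rightarrow> 'a) \<Rightarrow> 'a \<Rightarrow> bool" where
  "subloop H L m e \<longleftrightarrow> H \<subseteq> L \<and> loop H m e"

definition gen_subloop :: "'a set \<Rightarrow> ('a \<Rightarrow> 'a \<Rightarrow> 'a) \<Rightarrow> 'a \<Rightarrow> 'a set \<Rightarrow> 'a set" where
  "gen_subloop L m e X = \<Inter>{H. subloop H L m e \<and> X \<subseteq> H}"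

definition power_associative :: "'a set \<Rightarrow> ('a \<Rightarrow> 'a \<Rightarrow> 'a) \<Rightarrow> 'a \<Rightarrow> bool" where
  "power_associative L m e \<longleftrightarrow> (\<forall>x\<in>L. let S = gen_subloop L m e {x} in
     loop S m e \<and> (\<forall>a\<in>S. \<forall>b\<in>S. \<forall>c\<in>S. m (m a b) c = m a (m b c)))"

text \<open>Powers x^n (well-defined regardless of bracketing in a power associative loop).\<close>
primrec lpow :: "('a \<Rightarrow> 'a \<Rightarrow> 'a) \<Rightarrow> 'a \<Rightarrow> 'a \<Rightarrow> nat \<Rightarrow> 'a" where
  "lpow m e x 0 = e"
| "lpow m e x (Suc n) = m x (lpow m e x n)"

definition left_power_alternative :: "'a set \<Rightarrow> ('a \<Rightarrow> 'a \<Rightarrow> 'a) \<Rightarrow> 'a \<Rightarrow> bool" where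
  "left_power_alternative L m e \<longleftrightarrow>
     (\<forall>x\<in>L. \<forall>n>0. \<forall>y\<in>L. m (lpow m e x n) y = ((m x) ^^ n) y)"

definition linv :: "'a set \<Rightarrow> ('a \<Rightarrow> 'a \<Rightarrow> 'a) \<Rightarrow> 'a \<Rightarrow> 'a \<Rightarrow> 'a" where
  "linv L m e x = (THE z. z \<in> L \<and> m z x = e)"

definition left_inverse_property :: "'a set \<Rightarrow> ('a \<Rightarrow> 'a \<Rightarrow> 'a) \<Rightarrow> 'a \<Rightarrow> bool" where
  "left_inverse_property L m e \<longleftrightarrow> (\<forall>x\<in>L. \<forall>y\<in>L. m (linv L m e x) (m x y) = y)"

definition strong_monogenic_Lagrange :: "'a set \<Rightarrow> ('a \<Rightarrow> 'a \<Rightarrow> 'a) \<Rightarrow> 'a \<Rightarrow> bool" where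
  "strong_monogenic_Lagrange L m e \<longleftrightarrow>
     (\<forall>H. subloop H L m e \<longrightarrow> (\<forall>x\<in>H. card (gen_subloop L m e {x}) dvd card H))"

end

theory Submission
  imports Defs
begin

lemma lpow_funpow: "lpow m e x k = (m x ^^ k) e"
  by (induction k) auto

lemma funpow_in:
  assumes "\<forall>y\<in>L. f y \<in> L" "y \<in> L" shows "(f ^^ k) y \<in> L"
  using assms by (induction k) auto

lemma funpow_inj:
  assumes "\<forall>y\<in>L. f y \<in> L" "inj_on f L" shows "inj_on (f ^^ k) L"
proof (induction k)
  case 0 then show ?case by simp
next
  case (Suc k)
  show ?case
  proof (rule inj_onI)
    fix a b assume a: "a \<in> L" and b: "b \<in> L" and eq: "(f ^^ Suc k) a = (f ^^ Suc k) b"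
    have "(f ^^ k) a \<in> L" "(f ^^ k) b \<in> L" using funpow_in[OF assms(1)] a b by auto
    moreover have "f ((f ^^ k) a) = f ((f ^^ k) b)" using eq by simp
    ultimately have "(f ^^ k) a = (f ^^ k) b" using assms(2) unfolding inj_on_def by blast
    then show "a = b" using Suc.IH a b unfolding inj_on_def by blast
  qed
qed

lemma loop_e: "loop L m e \<Longrightarrow> e \<in> L"
  unfolding loop_def by (elim conjE)

lemma loop_cl: "loop L m e \<Longrightarrow> \<forall>x\<in>L. \<forall>y\<in>L. m x y \<in> L"
  unfolding loop_def by (elim conjE)

lemma loop_id: "loop L m e \<Longrightarrow> \<forall>x\<in>L. m e x = x \<and> m x e = x"
  unfolding loop_def by (elim conjE)

lemma loop_ldiv: "loop L m e \<Longrightarrow> \<forall>a\<in>L. \<forall>b\<in>L. \<exists>!x. x \<in> L \<and> m a x = b"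
  unfolding loop_def by (elim conjE)

lemma loop_rdiv: "loop L m e \<Longrightarrow> \<forall>a\<in>L. \<forall>b\<in>L. \<exists>!y. y \<in> L \<and> m y a = b"
  unfolding loop_def by (elim conjE)

lemma loop_closed: assumes "loop L m e" "a \<in> L" "b \<in> L" shows "m a b \<in> L"
  using bspec[OF bspec[OF loop_cl[OF assms(1)] assms(2)] assms(3)] .

lemma loop_lid: assumes "loop L m e" "a \<in> L" shows "m e a = a"
  using bspec[OF loop_id[OF assms(1)] assms(2)] by (rule conjunct1)

lemma loop_rid: assumes "loop L m e" "a \<in> L" shows "m a e = a"
  using bspec[OF loop_id[OF assms(1)] assms(2)] by (rule conjunct2)

lemma ex1_uniq: "\<exists>!x. P x \<Longrightarrow> P a \<Longrightarrow> P b \<Longrightarrow> a = b"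
proof (erule ex1E)
  fix x assume pa: "P a" and pb: "P b" and u: "\<forall>y. P y \<longrightarrow> y = x"
  have "a = x" using u[rule_format, OF pa] .
  moreover have "b = x" using u[rule_format, OF pb] .
  ultimately show "a = b" by simp
qed

lemma loop_inj:
  assumes "loop L m e" "x \<in> L" shows "inj_on (m x) L"
proof (rule inj_onI)
  fix a b assume a: "a \<in> L" and b: "b \<in> L" and ab: "m x a = m x b"
  have c: "m x a \<in> L" using loop_closed[OF assms(1,2) a] .
  have ex: "\<exists>!z. z \<in> L \<and> m x z = m x a" using bspec[OF bspec[OF loop_ldiv[OF assms(1)] assms(2)] c] .
  have pa: "a \<in> L \<and> m x a = m x a" using a by (rule conjI) (rule refl)
  have pb: "b \<in> L \<and> m x b = m x a" using b ab[symmetric] by (rule conjI)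
  show "a = b" using ex1_uniq[OF ex pa pb] .
qed

lemma loop_rcancel:
  assumes "loop L m e" "y \<in> L" "a \<in> L" "b \<in> L" "m a y = m b y" shows "a = b"
proof -
  have c: "m a y \<in> L" using loop_closed[OF assms(1,3,2)] .
  have ex: "\<exists>!z. z \<in> L \<and> m z y = m a y" using bspec[OF bspec[OF loop_rdiv[OF assms(1)] assms(2)] c] .
  have pa: "a \<in> L \<and> m a y = m a y" using assms(3) by (rule conjI) (rule refl)
  have pb: "b \<in> L \<and> m b y = m a y" using assms(4) assms(5)[symmetric] by (rule conjI)
  show ?thesis using ex1_uniq[OF ex pa pb] .
qed

theorem lemma4p6:
  fixes L :: "'a set" and m :: "'a \<Rightarrow> 'a \<Rightarrow> 'a" and e :: 'a
  assumes "loop L m e" and "finite L"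
    and "power_associative L m e"
    and "left_power_alternative L m e"
    and "left_inverse_property L m e"
  shows "strong_monogenic_Lagrange L m e"
  unfolding strong_monogenic_Lagrange_def
proof (intro allI impI ballI)
  fix H x assume sub: "subloop H L m e" and xH: "x \<in> H"
  have HL: "H \<subseteq> L" and lH: "loop H m e" using sub unfolding subloop_def by auto
  have xL: "x \<in> L" using xH HL by blast
  define f where "f = m x"
  define g where "g = (\<lambda>k. (f ^^ k) e)"
  have fL: "\<forall>y\<in>L. f y \<in> L" using loop_closed[OF assms(1) xL] f_def by blast
  have finj: "inj_on f L" using loop_inj[OF assms(1) xL] f_def by simp
  have eL: "e \<in> L" using loop_e[OF assms(1)] .
  have gL: "g k \<in> L" for k using funpow_in[OF fL eL] g_def by simp
  have F: "m (g k) y = (f ^^ k) y" if "y \<in> L" for k y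
  proof (cases "k = 0")
    case True then show ?thesis using g_def loop_lid[OF assms(1) that] by simp
  next
    case False
    then show ?thesis using assms(4) xL that unfolding left_power_alternative_def g_def f_def
      by (simp add: lpow_funpow)
  qed
  have "\<not> inj_on g {..card L}"
  proof
    assume "inj_on g {..card L}"
    then have "card (g ` {..card L}) = Suc (card L)" by (simp add: card_image)
    moreover have "g ` {..card L} \<subseteq> L" using gL by blast
    then have "card (g ` {..card L}) \<le> card L" using card_mono[OF assms(2)] by blast
    ultimately show False by linarith
  qed
  then obtain i j where ij: "i < j" "g i = g j"
    unfolding inj_on_def by (metis linorder_neqE_nat)
  have "g j = (f ^^ i) (g (j - i))" using ij(1) g_def
    by (metis funpow_add le_add_diff_inverse less_imp_le_nat o_apply)
  moreover have "g i = (f ^^ i) e" using g_def by simp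
  ultimately have "g (j - i) = e" using ij funpow_inj[OF fL finj, of i] gL eL
    unfolding inj_on_def by metis
  then have ex: "\<exists>k. 0 < k \<and> g k = e" using ij(1) by (intro exI[of _ "j - i"]) simp
  define n where "n = (LEAST k. 0 < k \<and> g k = e)"
  have npos: "0 < n" and gn: "g n = e" using LeastI_ex[OF ex] n_def by auto
  have nmin: "\<not> (0 < k \<and> g k = e)" if "k < n" for k using not_less_Least[OF that[unfolded n_def]] n_def by simp
  have fn: "(f ^^ n) y = y" if "y \<in> L" for y using F[OF that, of n] gn loop_lid[OF assms(1) that] by simp
  have fmod: "(f ^^ k) y = (f ^^ (k mod n)) y" if "y \<in> L" for k y
  proof (induction k rule: less_induct)
    case (less k)
    show ?case
    proof (cases "k < n")
      case True then show ?thesis by simp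
    next
      case False
      then have "(f ^^ k) y = (f ^^ (k - n)) ((f ^^ n) y)"
        by (metis funpow_add le_add_diff_inverse2 not_less o_apply)
      also have "\<dots> = (f ^^ (k - n)) y" using fn[OF that] by simp
      also have "\<dots> = (f ^^ ((k - n) mod n)) y" using less npos False by simp
      finally show ?thesis using False by (simp add: le_mod_geq)
    qed
  qed
  have gmod: "g k = g (k mod n)" for k using fmod[OF eL] g_def by simp
  have gadd: "m (g a) (g b) = g (a + b)" for a b
    using F[OF gL] g_def by (simp add: funpow_add)
  have ginj: "inj_on g {..<n}"
  proof (rule inj_onI)
    fix a b assume a: "a \<in> {..<n}" and b: "b \<in> {..<n}" and eq: "g a = g b"
    show "a = b"
    proof (rule ccontr)
      assume "a \<noteq> b"
      then consider "a < b" | "b < a" by linarith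
      then show False
      proof cases
        case 1
        have "(f ^^ a) (g (b - a)) = (f ^^ a) e"
          using eq 1 g_def by (metis funpow_add le_add_diff_inverse less_imp_le_nat o_apply)
        then have "g (b - a) = e" using funpow_inj[OF fL finj, of a] gL eL
          unfolding inj_on_def by metis
        moreover have "b - a < n" "0 < b - a" using 1 b by auto
        ultimately show False using nmin by blast
      next
        case 2
        have "(f ^^ b) (g (a - b)) = (f ^^ b) e"
          using eq 2 g_def by (metis funpow_add le_add_diff_inverse less_imp_le_nat o_apply)
        then have "g (a - b) = e" using funpow_inj[OF fL finj, of b] gL eL
          unfolding inj_on_def by metis
        moreover have "a - b < n" "0 < a - b" using 2 a by auto
        ultimately show False using nmin by blast
      qed
    qed
  qed
  define P where "P = g ` {..<n}"
  have PL: "P \<subseteq> L" using gL P_def by blast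
  have divP: "\<exists>c. c \<in> P \<and> (\<lambda>z. m (g a) z = g b \<and> m z (g a) = g b) c" if "a < n" "b < n" for a b
  proof -
    define c where "c = (b + (n - a)) mod n"
    have "(a + c) mod n = b"
    proof -
      have "(a + c) mod n = (a + (b + (n - a))) mod n" unfolding c_def by (simp add: mod_add_right_eq)
      also have "a + (b + (n - a)) = b + n" using that by simp
      finally show ?thesis using that by simp
    qed
    then have "g (a + c) = g b" "g (c + a) = g b" using gmod by (metis, metis add.commute)
    moreover have "c \<in> {..<n}" using npos c_def by simp
    ultimately have "g c \<in> P" "m (g a) (g c) = g b" "m (g c) (g a) = g b"
      using gadd[of a c] gadd[of c a] P_def by auto
    then show ?thesis by blast
  qed
  have loopP: "loop P m e"
    unfolding loop_def
  proof (intro conjI ballI)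
    have "g 0 = e" by (simp add: g_def)
    moreover have "0 \<in> {..<n}" using npos by simp
    ultimately show "e \<in> P" unfolding P_def by (metis image_eqI)
  next
    fix a b assume "a \<in> P" "b \<in> P"
    then obtain i j where "a = g i" "b = g j" using P_def by auto
    then have "m a b = g ((i + j) mod n)" using gadd gmod by simp
    moreover have "(i + j) mod n < n" using npos by simp
    ultimately show "m a b \<in> P" unfolding P_def by blast
  next
    fix a assume "a \<in> P" then show "m e a = a" using loop_lid[OF assms(1)] PL by blast
  next
    fix a assume "a \<in> P" then show "m a e = a" using loop_rid[OF assms(1)] PL by blast
  next
    fix a b assume a: "a \<in> P" and b: "b \<in> P"
    then obtain i j where "i < n" "j < n" "a = g i" "b = g j" using P_def by auto
    then obtain c where c: "c \<in> P" "m a c = b" using divP by blast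
    show "\<exists>!z. z \<in> P \<and> m a z = b"
    proof (rule ex1I[of _ c])
      show "c \<in> P \<and> m a c = b" using c by simp
      fix z assume "z \<in> P \<and> m a z = b"
      then show "z = c" using c loop_inj[OF assms(1), of a] a PL unfolding inj_on_def by blast
    qed
  next
    fix a b assume a: "a \<in> P" and b: "b \<in> P"
    then obtain i j where "i < n" "j < n" "a = g i" "b = g j" using P_def by auto
    then obtain c where c: "c \<in> P" "m c a = b" using divP by blast
    show "\<exists>!z. z \<in> P \<and> m z a = b"
    proof (rule ex1I[of _ c])
      show "c \<in> P \<and> m c a = b" using c by simp
      fix z assume "z \<in> P \<and> m z a = b"
      then have "z \<in> L" "m z a = m c a" using c PL by auto
      moreover have "a \<in> L" "c \<in> L" using a c PL by auto
      ultimately show "z = c" using loop_rcancel[OF assms(1)] by metis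
    qed
  qed
  have "x = g 1" using g_def f_def loop_rid[OF assms(1) xL] by simp
  then have "x = g (1 mod n)" using gmod[of 1] by simp
  moreover have "1 mod n \<in> {..<n}" using npos by simp
  ultimately have xP: "x \<in> P" unfolding P_def by (metis image_eqI)
  have CP: "gen_subloop L m e {x} \<subseteq> P"
    unfolding gen_subloop_def using loopP PL xP unfolding subloop_def by blast
  have PC: "P \<subseteq> gen_subloop L m e {x}"
  proof -
    have "g k \<in> K" if "loop K m e" "x \<in> K" for K k
      using that by (induction k) (auto simp: g_def f_def loop_e loop_closed)
    then show ?thesis unfolding gen_subloop_def subloop_def P_def by blast
  qed
  have cardC: "card (gen_subloop L m e {x}) = n"
  proof -
    have "gen_subloop L m e {x} = P" using CP PC by blast
    then show ?thesis using ginj P_def by (simp add: card_image)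
  qed
  have fH: "\<forall>y\<in>H. f y \<in> H" using loop_closed[OF lH xH] f_def by blast
  define Orb where "Orb = (\<lambda>y. (\<lambda>k. (f ^^ k) y) ` {..<n})"
  have Oall: "Orb y = range (\<lambda>k. (f ^^ k) y)" if "y \<in> L" for y
  proof
    show "Orb y \<subseteq> range (\<lambda>k. (f ^^ k) y)" unfolding Orb_def by blast
    show "range (\<lambda>k. (f ^^ k) y) \<subseteq> Orb y"
    proof
      fix w assume "w \<in> range (\<lambda>k. (f ^^ k) y)"
      then obtain k where "w = (f ^^ k) y" by blast
      then have "w = (f ^^ (k mod n)) y" using fmod[OF that] by simp
      moreover have "k mod n \<in> {..<n}" using npos by simp
      ultimately show "w \<in> Orb y" unfolding Orb_def by blast
    qed
  qed
  have cardO: "card (Orb y) = n" if "y \<in> H" for y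
  proof -
    have yL: "y \<in> L" using that HL by blast
    have "inj_on (\<lambda>k. (f ^^ k) y) {..<n}"
    proof (rule inj_onI)
      fix a b assume "a \<in> {..<n}" "b \<in> {..<n}" "(f ^^ a) y = (f ^^ b) y"
      then have "m (g a) y = m (g b) y" using F[OF yL] by simp
      then have "g a = g b" using loop_rcancel[OF assms(1) yL gL gL] by blast
      then show "a = b" using ginj \<open>a \<in> _\<close> \<open>b \<in> _\<close> unfolding inj_on_def by blast
    qed
    then show ?thesis unfolding Orb_def by (simp add: card_image)
  qed
  have Osub: "Orb z \<subseteq> Orb y" if yz: "y \<in> L" "z \<in> L" "w \<in> Orb y" "w \<in> Orb z" for y z w
  proof -
    obtain i where wi: "w = (f ^^ i) y" using yz(3) unfolding Orb_def by blast
    obtain j where wj: "w = (f ^^ j) z" "j < n" using yz(4) unfolding Orb_def by blast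
    have "(f ^^ (n - j)) w = (f ^^ (n - j)) ((f ^^ j) z)" using wj by simp
    also have "\<dots> = (f ^^ (n - j + j)) z" by (simp add: funpow_add)
    also have "n - j + j = n" using wj by simp
    finally have "(f ^^ (n - j)) w = (f ^^ n) z" .
    then have "z = (f ^^ (n - j + i)) y" using fn[OF yz(2)] wi by (simp add: funpow_add)
    then have hk: "(f ^^ k) z = (f ^^ (k + (n - j + i))) y" for k by (simp add: funpow_add)
    show ?thesis unfolding Oall[OF yz(1)] Oall[OF yz(2)]
    proof
      fix v assume "v \<in> range (\<lambda>k. (f ^^ k) z)"
      then obtain k where "v = (f ^^ k) z" by blast
      then have "v = (f ^^ (k + (n - j + i))) y" using hk by simp
      then show "v \<in> range (\<lambda>k. (f ^^ k) y)" by blast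
    qed
  qed
  have OH: "Orb y \<subseteq> H" if "y \<in> H" for y
    using funpow_in[OF fH that] unfolding Orb_def by blast
  have yO: "y \<in> Orb y" for y
  proof -
    have "(f ^^ 0) y = y" by simp
    moreover have "(0::nat) \<in> {..<n}" using npos by simp
    ultimately show ?thesis unfolding Orb_def by (metis image_eqI)
  qed
  have U: "\<Union> (Orb ` H) = H" using OH yO by blast
  have finH: "finite H" using HL assms(2) finite_subset by blast
  have "n * card (Orb ` H) = card (\<Union> (Orb ` H))"
  proof (rule card_partition)
    show "finite (Orb ` H)" using finH by simp
    show "finite (\<Union> (Orb ` H))" using U finH by simp
    show "card c = n" if "c \<in> Orb ` H" for c using cardO that by blast
    show "c1 \<inter> c2 = {}" if c12: "c1 \<in> Orb ` H" "c2 \<in> Orb ` H" "c1 \<noteq> c2" for c1 c2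
    proof (rule ccontr)
      assume "c1 \<inter> c2 \<noteq> {}"
      then obtain w where "w \<in> c1" "w \<in> c2" by blast
      moreover obtain y z where "y \<in> H" "z \<in> H" "c1 = Orb y" "c2 = Orb z" using c12 by blast
      ultimately have "y \<in> L" "z \<in> L" "w \<in> Orb y" "w \<in> Orb z" "c1 = Orb y" "c2 = Orb z"
        using HL by auto
      then have "c1 \<subseteq> c2" "c2 \<subseteq> c1" using Osub[of y z w] Osub[of z y w] by auto
      then show False using c12(3) by blast
    qed
  qed
  then have "card H = n * card (Orb ` H)" unfolding U by simp
  then show "card (gen_subloop L m e {x}) dvd card H" unfolding cardC by (rule dvdI)
qed

end
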